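(* Let $\Gamma$ and the data $s_0,\eta_0,\Xi$ be as in the context. There exists a constant $c>0$ such that for all sufficiently large $X>0$ and every closed ball $B\subset\mathbb R^{n-1}$ of radius $c/\sqrt X$, there is at least one cusp $\gamma\xi\infty$ of $\Gamma$ ($\gamma\in\Gamma$, $\xi\in\Xi$, $\gamma\xi\notin P$) with $\gamma\xi\infty\in B$ and $h(\gamma\xi\infty)\le X$.
   Context: $n\ge2$, $G=\mathrm{SO}(n,1)$, $K\cong\mathrm{SO}(n)$ maximal compact. $A=\{a(t)\}$ a one-parameter $\mathbb R$-split torus with $\mathfrak g=\mathfrak g_{-1}\oplus\mathfrak z(A)\oplus\mathfrak g_{+1}$, $\mathrm{Ad}(a(t))=e^{\pm t}$ on $\mathfrak g_{\pm1}$; $M=Z_G(A)\cap K$, $N=\exp\mathfrak g_{+1}$, $\mathfrak g_{+1}\cong\mathbb R^{n-1}$ with $\mathrm{Ad}(M)$-invariant Euclidean norm, $u(\mathbf x)=\exp\mathbf x$; $\sigma\in K$ with $\sigma^2=e$, $\sigma a(t)\sigma^{-1}=a(-t)$; $P=MAN$. Each $g\in G\setminus P$ is $g=u(\mathbf x)\sigma ma(r)u(\mathbf y)$ with $\mathbf x,r$ unique; $\partial\mathbb H^n\cong\mathbb R^{n-1}\cup\{\infty\}$ via $u(\mathbf x)\sigma P\mapsto\mathbf x$, $P\mapsto\infty$. $\Omega(\eta,s)=\eta\{a(t):t\ge s\}K$. $\Gamma$ discrete, $\Gamma\backslash G$ of finite volume, $\Gamma\backslash\mathbb H^n$ non-compact,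 with fixed $s_0>0$, compact $\eta_0\subset N$, finite $\Xi\ni e$ satisfying: (i) $G=\Gamma\Xi\Omega(\eta_0,s_0)$; (ii) $\Gamma\cap\xi N\xi^{-1}$ cocompact in $\xi N\xi^{-1}$; (iii) for compact $\eta$, $\{\gamma:\gamma\Xi\Omega(\eta,s_0)\cap\Omega(\eta,s_0)\ne\emptyset\}$ finite; (iv) for compact $\eta\supseteq\eta_0$ some $s_1>s_0$ with $\gamma\xi_1\Omega(\eta,s_0)\cap\xi_2\Omega(\eta,s_1)\ne\emptyset\Rightarrow\xi_1=\xi_2,\gamma\in\xi_1NM\xi_1^{-1}$. Height: for $\gamma\xi=u(\mathbf x_1)\sigma ma(r)u(\mathbf y)$, $\gamma\xi\infty=\mathbf x_1$ and $h(\gamma\xi\infty)=e^r$. *)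

theory Defs
  imports "HOL-Analysis.Analysis"
begin

text \<open>Index set for the Lorentzian space R^{n+1} in light-cone coordinates:
  Lo, Mid i (i ranging over a finite type 'd of cardinality n-1), Hi.
  The quadratic form is Q(v) = sum_i v(Mid i)^2 - 2 v(Lo) v(Hi), of signature (n,1).\<close>

datatype 'd lidx = Lo | Mid 'd | Hi

lemma UNIV_lidx: "(UNIV :: 'd lidx set) = insert Lo (insert Hi (range Mid))"
  by (auto intro: lidx.exhaust)

instance lidx :: (finite) finite
  by standard (simp add: UNIV_lidx)

type_synonym 'd mat = "real^'d lidx^'d lidx"

definition Jform :: "('d::finite) mat" where
  "Jform = (\<chi> i j. case (i, j) of
      (Mid a, Mid b) \<Rightarrow> (if a = b then 1 else 0)
    | (Lo, Hi) \<Rightarrow> -1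
    | (Hi, Lo) \<Rightarrow> -1
    | _ \<Rightarrow> 0)"

definition basept :: "real^('d::finite) lidx" where
  "basept = (\<chi> i. case i of Mid _ \<Rightarrow> 0 | _ \<Rightarrow> 1)"

text \<open>G = SO(n,1) (identity component: det 1 and time-orientation preserving).\<close>
definition SOn1 :: "('d::finite) mat set" where
  "SOn1 = {g. transpose g ** Jform ** g = Jform \<and> det g = 1 \<and> (g *v basept) $ Lo > 0}"

definition Kgrp :: "('d::finite) mat set" where
  "Kgrp = {g \<in> SOn1. g *v basept = basept}"

text \<open>The R-split torus a(t); Ad(a(t)) = e^{t} on g_{+1}.\<close>
definition aa :: "real \<Rightarrow> ('d::finite) mat" where
  "aa t = (\<chi> i j. if i = j then (case i of Lo \<Rightarrow> exp t | Mid _ \<Rightarrow> 1 | Hi \<Rightarrow> exp (- t)) else 0)"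

text \<open>u(x) = exp x for x in g_{+1} = R^{n-1} (explicitly I + X + X^2/2, X nilpotent).\<close>
definition uu :: "real^('d::finite) \<Rightarrow> 'd mat" where
  "uu x = (\<chi> i j. case (i, j) of
      (Lo, Lo) \<Rightarrow> 1
    | (Lo, Mid b) \<Rightarrow> x $ b
    | (Lo, Hi) \<Rightarrow> (norm x)^2 / 2
    | (Mid a, Mid b) \<Rightarrow> (if a = b then 1 else 0)
    | (Mid a, Hi) \<Rightarrow> x $ a
    | (Hi, Hi) \<Rightarrow> 1
    | _ \<Rightarrow> 0)"

definition Ngrp :: "('d::finite) mat set" where
  "Ngrp = range uu"

definition Mgrp :: "('d::finite) mat set" where
  "Mgrp = {g \<in> Kgrp. \<forall>t. g ** aa t = aa t ** g}"

definition Pgrp :: "('d::finite) mat set" where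
  "Pgrp = {m ** aa t ** uu x | m t x. m \<in> Mgrp}"

definition lmul :: "('d::finite) mat \<Rightarrow> 'd mat set \<Rightarrow> 'd mat set" where
  "lmul g S = (\<lambda>h. g ** h) ` S"

definition conjset :: "('d::finite) mat \<Rightarrow> 'd mat set \<Rightarrow> 'd mat set" where
  "conjset g S = (\<lambda>h. g ** h ** matrix_inv g) ` S"

definition Omega :: "('d::finite) mat set \<Rightarrow> real \<Rightarrow> 'd mat set" where
  "Omega eta s = {n ** aa t ** k | n t k. n \<in> eta \<and> s \<le> t \<and> k \<in> Kgrp}"

definition weyl_elt :: "('d::finite) mat \<Rightarrow> bool" where
  "weyl_elt \<sigma> \<longleftrightarrow> \<sigma> \<in> Kgrp \<and> \<sigma> ** \<sigma> = mat 1 \<and> (\<forall>t. \<sigma> ** aa t ** matrix_inv \<sigma> = aa (- t))"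

text \<open>g = u(x) sigma m a(r) u(y); then g infinity = x and h(g infinity) = exp r.\<close>
definition bruhat :: "('d::finite) mat \<Rightarrow> 'd mat \<Rightarrow> real^'d \<Rightarrow> real \<Rightarrow> bool" where
  "bruhat \<sigma> g x r \<longleftrightarrow> (\<exists>m \<in> Mgrp. \<exists>y. g = uu x ** \<sigma> ** m ** aa r ** uu y)"

definition is_subgroup :: "('d::finite) mat set \<Rightarrow> bool" where
  "is_subgroup \<Gamma> \<longleftrightarrow> \<Gamma> \<subseteq> SOn1 \<and> mat 1 \<in> \<Gamma> \<and> (\<forall>g\<in>\<Gamma>. \<forall>h\<in>\<Gamma>. g ** h \<in> \<Gamma>)
     \<and> (\<forall>g\<in>\<Gamma>. matrix_inv g \<in> \<Gamma>)"

definition discrete_set :: "('d::finite) mat set \<Rightarrow> bool" where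
  "discrete_set \<Gamma> \<longleftrightarrow> (\<forall>g\<in>\<Gamma>. \<exists>e>0. \<forall>h\<in>\<Gamma>. dist h g < e \<longrightarrow> h = g)"

definition haar :: "('d::finite) mat measure \<Rightarrow> bool" where
  "haar \<mu> \<longleftrightarrow> space \<mu> = SOn1 \<and> sets \<mu> = sets (restrict_space borel SOn1)
     \<and> (\<forall>g\<in>SOn1. \<forall>A\<in>sets \<mu>. emeasure \<mu> (lmul g A) = emeasure \<mu> A)
     \<and> (\<forall>C. compact C \<and> C \<subseteq> SOn1 \<longrightarrow> emeasure \<mu> C < \<infinity>)
     \<and> emeasure \<mu> SOn1 > 0"

definition finite_covolume :: "('d::finite) mat set \<Rightarrow> bool" where
  "finite_covolume \<Gamma> \<longleftrightarrow> (\<exists>\<mu>. haar \<mu> \<and>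
     (\<exists>F\<in>sets \<mu>. (\<Union>\<gamma>\<in>\<Gamma>. lmul \<gamma> F) = SOn1 \<and> emeasure \<mu> F < \<infinity>))"

text \<open>Gamma\G (equivalently Gamma\H^n, as K is compact) is not compact.\<close>
definition noncocompact :: "('d::finite) mat set \<Rightarrow> bool" where
  "noncocompact \<Gamma> \<longleftrightarrow> \<not> (\<exists>C. compact C \<and> C \<subseteq> SOn1 \<and> SOn1 \<subseteq> (\<Union>\<gamma>\<in>\<Gamma>. lmul \<gamma> C))"

end

theory Submission
  imports Defs
begin


lemma sum_lidx: "(\<Sum>i\<in>(UNIV::('d::finite) lidx set). f i) = f Lo + f Hi + (\<Sum>b\<in>UNIV. f (Mid b))"
proof -
  have "(UNIV::'d lidx set) = insert Lo (insert Hi (range Mid))" by (rule UNIV_lidx)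
  moreover have "inj Mid" by (auto intro: injI)
  ultimately have "(\<Sum>i\<in>(UNIV::'d lidx set). f i) = (\<Sum>i\<in>insert Lo (insert Hi (range Mid)). f i)" by simp
  also have "\<dots> = f Lo + f Hi + (\<Sum>i\<in>range Mid. f i)" by (simp add: add.assoc image_iff)
  also have "(\<Sum>i\<in>range Mid. f i) = (\<Sum>b\<in>UNIV. f (Mid b))" using sum.reindex[OF \<open>inj Mid\<close>, of f] by (simp add: o_def)
  finally show ?thesis .
qed

lemma Jform_simps[simp]:
  "Jform $ Lo $ Lo = 0" "Jform $ Lo $ Hi = -1" "Jform $ Hi $ Lo = -1" "Jform $ Hi $ Hi = 0"
  "Jform $ Lo $ Mid a = 0" "Jform $ Hi $ Mid a = 0" "Jform $ Mid a $ Lo = 0" "Jform $ Mid a $ Hi = 0"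
  "Jform $ Mid a $ Mid b = (if a = b then 1 else 0)"
  by (simp_all add: Jform_def)

lemma uu_simps[simp]:
  "uu x $ Lo $ Lo = 1" "uu x $ Lo $ Mid b = x $ b" "uu x $ Lo $ Hi = (norm x)^2/2"
  "uu x $ Mid a $ Lo = 0" "uu x $ Mid a $ Mid b = (if a = b then 1 else 0)" "uu x $ Mid a $ Hi = x $ a"
  "uu x $ Hi $ Lo = 0" "uu x $ Hi $ Mid b = 0" "uu x $ Hi $ Hi = 1"
  by (simp_all add: uu_def)

lemma aa_simps[simp]:
  "aa t $ Lo $ Lo = exp t" "aa t $ Lo $ Mid b = 0" "aa t $ Lo $ Hi = 0"
  "aa t $ Mid a $ Lo = 0" "aa t $ Mid a $ Mid b = (if a = b then 1 else 0)" "aa t $ Mid a $ Hi = 0"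
  "aa t $ Hi $ Lo = 0" "aa t $ Hi $ Mid b = 0" "aa t $ Hi $ Hi = exp (-t)"
  by (simp_all add: aa_def)

lemma mat1_simps[simp]:
  "(mat 1::'d::finite mat) $ Lo $ Lo = 1" "(mat 1::'d mat) $ Lo $ Mid b = 0" "(mat 1::'d mat) $ Lo $ Hi = 0"
  "(mat 1::'d mat) $ Mid a $ Lo = 0" "(mat 1::'d mat) $ Mid a $ Mid b = (if a = b then 1 else 0)" "(mat 1::'d mat) $ Mid a $ Hi = 0"
  "(mat 1::'d mat) $ Hi $ Lo = 0" "(mat 1::'d mat) $ Hi $ Mid b = 0" "(mat 1::'d mat) $ Hi $ Hi = 1"
  by (simp_all add: mat_def)

lemma mat_eqI:
  fixes A B :: "('d::finite) mat"
  assumes "A$Lo$Lo = B$Lo$Lo" "\<And>b. A$Lo$Mid b = B$Lo$Mid b" "A$Lo$Hi = B$Lo$Hi"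
   "\<And>a. A$Mid a$Lo = B$Mid a$Lo" "\<And>a b. A$Mid a$Mid b = B$Mid a$Mid b" "\<And>a. A$Mid a$Hi = B$Mid a$Hi"
   "A$Hi$Lo = B$Hi$Lo" "\<And>b. A$Hi$Mid b = B$Hi$Mid b" "A$Hi$Hi = B$Hi$Hi"
  shows "A = B"
proof -
  have "A$i$j = B$i$j" for i j using assms by (cases i; cases j) auto
  then show ?thesis by (simp add: vec_eq_iff)
qed

lemma mult_entry: "(A ** B) $ i $ j = (\<Sum>k\<in>UNIV. A$i$k * B$k$j)"
  by (simp add: matrix_matrix_mult_def)

lemma norm_sq_sum: "(norm (x::real^'d::finite))^2 = (\<Sum>b\<in>UNIV. (x$b)^2)"
  by (simp add: norm_vec_def L2_set_def real_sqrt_pow2 sum_nonneg real_norm_def)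


lemma delta_simps[simp]:
  "\<And>f::'d::finite\<Rightarrow>real. (\<Sum>c\<in>UNIV. (if a = c then 1 else 0) * f c) = f a"
  "\<And>f::'d::finite\<Rightarrow>real. (\<Sum>c\<in>UNIV. (if c = a then 1 else 0) * f c) = f a"
  "\<And>f::'d::finite\<Rightarrow>real. (\<Sum>c\<in>UNIV. f c * (if a = c then 1 else 0)) = f a"
  "\<And>f::'d::finite\<Rightarrow>real. (\<Sum>c\<in>UNIV. f c * (if c = a then 1 else 0)) = f a"
  by (simp_all add: if_distrib if_distribR sum.delta sum.delta' cong: if_cong)

lemma inner_sum: "(\<Sum>b\<in>UNIV. (x::real^'d::finite)$b * y$b) = x \<bullet> y"
  by (simp add: inner_vec_def)

lemma norm_add_sq: "(norm ((x::real^'d::finite) + y))^2 = (norm x)^2 + 2 * (x \<bullet> y) + (norm y)^2"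
  by (simp add: power2_norm_eq_inner inner_add inner_commute)

lemma uu_mult: "uu x ** uu y = uu (x + y)"
  apply (rule mat_eqI)
  by (simp_all add: mult_entry sum_lidx inner_sum norm_add_sq)

lemma prod_lidx: "(\<Prod>i\<in>(UNIV::('d::finite) lidx set). f i) = f Lo * f Hi * (\<Prod>b\<in>UNIV. f (Mid b))"
proof -
  have "inj Mid" by (auto intro: injI)
  have "(\<Prod>i\<in>(UNIV::'d lidx set). f i) = (\<Prod>i\<in>insert Lo (insert Hi (range Mid)). f i)" by (simp only: UNIV_lidx[symmetric])
  also have "\<dots> = f Lo * f Hi * (\<Prod>i\<in>range Mid. f i)" by (simp add: mult.assoc image_iff)
  also have "(\<Prod>i\<in>range Mid. f i) = (\<Prod>b\<in>UNIV. f (Mid b))" using prod.reindex[OF \<open>inj Mid\<close>, of f] by (simp add: o_def)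
  finally show ?thesis .
qed

lemma mv_entry: "(A *v v) $ i = (\<Sum>k\<in>UNIV. A$i$k * v$k)"
  by (simp add: matrix_vector_mult_def)

definition eLo :: "real^('d::finite) lidx" where "eLo = (\<chi> i. case i of Lo \<Rightarrow> 1 | _ \<Rightarrow> 0)"
definition eHi :: "real^('d::finite) lidx" where "eHi = (\<chi> i. case i of Hi \<Rightarrow> 1 | _ \<Rightarrow> 0)"
definition midv :: "real^('d::finite) lidx \<Rightarrow> real^'d" where "midv w = (\<chi> b. w $ Mid b)"

lemma e_simps[simp]:
  "eLo $ Lo = 1" "eLo $ Hi = 0" "eLo $ Mid b = 0" "eHi $ Lo = 0" "eHi $ Hi = 1" "eHi $ Mid b = 0"
  "basept $ Lo = 1" "basept $ Hi = 1" "basept $ Mid b = 0"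
  "midv w $ b = w $ Mid b"
  by (simp_all add: eLo_def eHi_def basept_def midv_def)

lemma vec_lidx_eqI:
  fixes v w :: "real^('d::finite) lidx"
  assumes "v$Lo = w$Lo" "v$Hi = w$Hi" "\<And>b. v$Mid b = w$Mid b"
  shows "v = w"
proof -
  have "v$i = w$i" for i using assms by (cases i) auto
  then show ?thesis by (simp add: vec_eq_iff)
qed

lemma basept_eq: "basept = eLo + eHi"
  by (rule vec_lidx_eqI) auto

definition Bf :: "real^('d::finite) lidx \<Rightarrow> real^'d lidx \<Rightarrow> real" where
  "Bf v w = midv v \<bullet> midv w - v$Lo * w$Hi - v$Hi * w$Lo"

lemma J_mv: "Jform *v w = (\<chi> i. case i of Lo \<Rightarrow> - w$Hi | Hi \<Rightarrow> - w$Lo | Mid b \<Rightarrow> w$Mid b)"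
  by (rule vec_lidx_eqI) (simp_all add: mv_entry sum_lidx)

lemma Bf_J: "v \<bullet> (Jform *v w) = Bf v w"
  by (simp add: J_mv Bf_def inner_vec_def sum_lidx)

definition Jpres :: "('d::finite) mat \<Rightarrow> bool" where "Jpres g \<longleftrightarrow> transpose g ** Jform ** g = Jform"

lemma Bf_inv: assumes "Jpres g" shows "Bf (g *v v) (g *v w) = Bf v w"
proof -
  have "Bf (g *v v) (g *v w) = (v v* transpose g) \<bullet> (Jform *v (g *v w))"
    by (simp add: Bf_J[symmetric])
  also have "\<dots> = v \<bullet> (transpose g *v (Jform *v (g *v w)))" by (rule dot_lmul_matrix)
  also have "\<dots> = v \<bullet> ((transpose g ** Jform ** g) *v w)" by (simp add: matrix_vector_mul_assoc matrix_mul_assoc)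
  also have "\<dots> = Bf v w" using assms by (simp add: Jpres_def Bf_J)
  finally show ?thesis .
qed

lemma Jpres_mult: "Jpres a \<Longrightarrow> Jpres b \<Longrightarrow> Jpres (a ** b)"
  unfolding Jpres_def
  by (metis matrix_mul_assoc matrix_transpose_mul)

lemma JJ: "Jform ** Jform = (mat 1 :: ('d::finite) mat)"
  by (rule mat_eqI) (simp_all add: mult_entry sum_lidx)

lemma JT: "transpose Jform = (Jform :: ('d::finite) mat)"
  by (rule mat_eqI) (simp_all add: transpose_def)

lemma minv_unique: fixes A B :: "('d::finite) mat"
  assumes "A ** B = mat 1" "B ** A = mat 1" shows "matrix_inv A = B"
proof -
  have ex: "\<exists>A'. A ** A' = mat 1 \<and> A' ** A = mat 1" using assms by blast
  define C where "C = matrix_inv A"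
  have C: "A ** C = mat 1 \<and> C ** A = mat 1" unfolding C_def matrix_inv_def by (rule someI_ex[OF ex])
  have "C = C ** (A ** B)" using assms by simp
  also have "\<dots> = B" using C by (simp add: matrix_mul_assoc)
  finally show ?thesis by (simp add: C_def)
qed

lemma Jpres_inv:
  assumes "Jpres (g::('d::finite) mat)"
  shows "matrix_inv g = Jform ** transpose g ** Jform" "g ** matrix_inv g = mat 1" "matrix_inv g ** g = mat 1"
    "Jpres (matrix_inv g)"
proof -
  have l: "(Jform ** transpose g ** Jform) ** g = mat 1"
    using assms unfolding Jpres_def by (metis JJ matrix_mul_assoc)
  then have r: "g ** (Jform ** transpose g ** Jform) = mat 1"
    using matrix_left_right_inverse by blast
  show e: "matrix_inv g = Jform ** transpose g ** Jform" by (rule minv_unique[OF r l])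
  show "g ** matrix_inv g = mat 1" "matrix_inv g ** g = mat 1" using l r e by auto
  have t: "transpose (Jform ** transpose g ** Jform) = Jform ** g ** Jform"
    by (simp add: matrix_transpose_mul JT matrix_mul_assoc)
  have "transpose (Jform ** transpose g ** Jform) ** Jform ** (Jform ** transpose g ** Jform)
      = Jform ** g ** (Jform ** Jform) ** (Jform ** transpose g ** Jform)"
    unfolding t by (simp add: matrix_mul_assoc)
  also have "\<dots> = Jform ** (g ** (Jform ** transpose g ** Jform))"
    by (simp add: JJ matrix_mul_assoc)
  also have "\<dots> = Jform" using r by simp
  finally show "Jpres (matrix_inv g)" unfolding Jpres_def e .
qed

lemma Jpres_aa: "Jpres (aa t)"
  unfolding Jpres_def
  by (rule mat_eqI) (simp_all add: mult_entry sum_lidx transpose_def exp_minus)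

lemma aa_mult: "aa s ** aa t = aa (s + t)"
  by (rule mat_eqI) (simp_all add: mult_entry sum_lidx mult_exp_exp)

lemma uTJ: "transpose (uu x) ** Jform = (\<chi> i j. case (i,j) of
   (Lo, Hi) \<Rightarrow> -1 | (Mid a, Mid b) \<Rightarrow> (if a = b then 1 else 0) | (Mid a, Hi) \<Rightarrow> (- (x $ a))
  | (Hi, Lo) \<Rightarrow> -1 | (Hi, Mid b) \<Rightarrow> (x $ b) | (Hi, Hi) \<Rightarrow> (- ((norm x)^2/2)) | _ \<Rightarrow> 0)"
  by (rule mat_eqI) (simp_all add: mult_entry sum_lidx transpose_def)

lemma Jpres_uu: "Jpres (uu x)"
  unfolding Jpres_def uTJ
  by (rule mat_eqI) (simp_all add: mult_entry sum_lidx inner_sum norm_sq_sum[symmetric] power2_norm_eq_inner[symmetric] power2_eq_square)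
lemma aa_0: "aa 0 = mat 1" by (rule mat_eqI) simp_all
lemma uu_0: "uu 0 = mat 1" by (rule mat_eqI) simp_all

lemma aa_inv: "aa t ** aa (-t) = mat 1" "aa (-t) ** aa t = mat 1"
  by (simp_all add: aa_mult aa_0)
lemma uu_inv: "uu x ** uu (-x) = mat 1" "uu (-x) ** uu x = mat 1"
  by (simp_all add: uu_mult uu_0)

lemma exp_sq: "(exp (t::real))^2 = exp (2*t)"
  by (rule exp_double[symmetric])

lemma aa_uu_conj: "aa t ** uu x ** aa (-t) = uu (exp t *\<^sub>R x)"
  apply (rule mat_eqI) apply (simp_all add: mult_entry sum_lidx mult_exp_exp power_mult_distrib)
  apply (simp add: exp_double)
  done

lemma det_aa: "det (aa t :: ('d::finite) mat) = 1"
  using det_diagonal[of "aa t :: 'd mat"] by (simp add: aa_def prod_lidx exp_minus)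

lemma det_uu: "det (uu (x::real^('d::finite))) = 1"
proof -
  have d1: "det (uu y) * det (uu (-y)) = 1" for y :: "real^'d"
    by (metis det_I det_mul uu_inv(1))
  have d2: "det (uu (2 *\<^sub>R y)) = det (uu y)^2" for y :: "real^'d"
    by (simp add: det_mul[symmetric] uu_mult power2_eq_square scaleR_2)
  have d3: "det (uu (2 *\<^sub>R y)) = det (uu y)" for y :: "real^'d"
  proof -
    have "det (uu (exp (ln 2) *\<^sub>R y)) = det (aa (ln 2) ** uu y ** aa (- ln 2) :: 'd mat)"
      by (simp only: aa_uu_conj)
    also have "\<dots> = det (aa (ln 2) :: 'd mat) * det (uu y) * det (aa (- ln 2) :: 'd mat)" by (simp only: det_mul)
    finally have "det (uu (exp (ln 2) *\<^sub>R y)) = det (aa (ln 2) :: 'd mat) * det (uu y) * det (aa (- ln 2) :: 'd mat)" .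
    then show ?thesis by (simp add: det_aa)
  qed
  have "det (uu x) = det (uu x)^2" using d2[of x] d3[of x] by simp
  moreover have "det (uu x) \<noteq> 0" using d1[of x] by auto
  ultimately show ?thesis by (simp add: power2_eq_square)
qed



lemma uu_mv[simp]:
  "(uu x *v v) $ Lo = v$Lo + x \<bullet> midv v + (norm x)^2/2 * v$Hi"
  "(uu x *v v) $ Mid b = v$Mid b + x$b * v$Hi"
  "(uu x *v v) $ Hi = v$Hi"
  by (simp_all add: mv_entry sum_lidx inner_vec_def)

lemma aa_mv[simp]:
  "(aa t *v v) $ Lo = exp t * v$Lo"
  "(aa t *v v) $ Mid b = v$Mid b"
  "(aa t *v v) $ Hi = exp (-t) * v$Hi"
  by (simp_all add: mv_entry sum_lidx)

lemma midv_e[simp]: "midv eLo = 0" "midv eHi = 0"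
  by (simp_all add: vec_eq_iff)

lemma uu_eLo[simp]: "uu x *v eLo = eLo"
  by (rule vec_lidx_eqI) simp_all

lemma aa_eLo[simp]: "aa t *v eLo = exp t *\<^sub>R eLo"
  by (rule vec_lidx_eqI) simp_all

lemma aa_eHi[simp]: "aa t *v eHi = exp (-t) *\<^sub>R eHi"
  by (rule vec_lidx_eqI) simp_all

definition nv :: "real^'d::finite \<Rightarrow> real^'d lidx" where "nv x = uu x *v eHi"

lemma nv_simps[simp]: "nv x $ Lo = (norm x)^2/2" "nv x $ Mid b = x $ b" "nv x $ Hi = 1"
  by (simp_all add: nv_def)

lemma Bf_simps:
  "Bf w eLo = - w$Hi" "Bf w eHi = - w$Lo" "Bf eLo w = - w$Hi" "Bf eHi w = - w$Lo"
  "Bf w w = (norm (midv w))^2 - 2 * w$Lo * w$Hi"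
  by (simp_all add: Bf_def power2_norm_eq_inner)

lemma Bf_scale: "Bf (c *\<^sub>R v) w = c * Bf v w" "Bf v (c *\<^sub>R w) = c * Bf v w"
  by (simp_all add: Bf_def midv_def algebra_simps inner_vec_def sum_distrib_left)

lemma eigen_Lo:
  assumes "t \<noteq> 0" "aa t *v w = exp t *\<^sub>R w"
  shows "w = w$Lo *\<^sub>R eLo"
proof (rule vec_lidx_eqI)
  have "exp t \<noteq> 1" using assms(1) by simp
  have "exp (-t) \<noteq> exp t" using assms(1) by simp
  fix b
  have "(aa t *v w)$Mid b = (exp t *\<^sub>R w)$Mid b" using assms(2) by simp
  then show "w $ Mid b = (w$Lo *\<^sub>R eLo) $ Mid b" using \<open>exp t \<noteq> 1\<close> by simp
next
  have "exp (-t) \<noteq> exp t" using assms(1) by simp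
  have "(aa t *v w)$Hi = (exp t *\<^sub>R w)$Hi" using assms(2) by simp
  then show "w $ Hi = (w$Lo *\<^sub>R eLo) $ Hi" using \<open>exp (-t) \<noteq> exp t\<close> by simp
qed simp

lemma eigen_Hi:
  assumes "t \<noteq> 0" "aa t *v w = exp (-t) *\<^sub>R w"
  shows "w = w$Hi *\<^sub>R eHi"
proof (rule vec_lidx_eqI)
  have "exp (-t) \<noteq> 1" using assms(1) by simp
  fix b
  have "(aa t *v w)$Mid b = (exp (-t) *\<^sub>R w)$Mid b" using assms(2) by simp
  then show "w $ Mid b = (w$Hi *\<^sub>R eHi) $ Mid b" using \<open>exp (-t) \<noteq> 1\<close> by simp
next
  have "exp (-t) \<noteq> exp t" using assms(1) by simp
  have "(aa t *v w)$Lo = (exp (-t) *\<^sub>R w)$Lo" using assms(2) by simp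
  then show "w $ Lo = (w$Hi *\<^sub>R eHi) $ Lo" using \<open>exp (-t) \<noteq> exp t\<close> by simp
qed simp

lemma SOn1D: "g \<in> SOn1 \<Longrightarrow> Jpres g \<and> det g = 1"
  by (simp add: SOn1_def Jpres_def)

lemma KgrpD: "k \<in> Kgrp \<Longrightarrow> Jpres k \<and> det k = 1 \<and> k *v basept = basept"
  by (simp add: Kgrp_def SOn1D)

lemma mv_scale: "A *v (c *\<^sub>R v) = c *\<^sub>R (A *v (v::real^'n::finite))"
  by (simp add: vec_eq_iff matrix_vector_mult_def sum_distrib_left algebra_simps)

lemma mv_add: "A *v (v + w) = A *v v + A *v (w::real^'n::finite)"
  by (simp add: matrix_vector_right_distrib)

lemma fix_eLo_eHi:
  fixes A :: "('d::finite) mat"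
  assumes "A *v eLo = c *\<^sub>R eLo" "A *v eHi = d *\<^sub>R eHi" "A *v basept = (basept :: real^('d::finite) lidx)"
  shows "c = 1" "d = 1"
proof -
  have "A *v basept = c *\<^sub>R eLo + d *\<^sub>R eHi" unfolding basept_eq mv_add assms(1,2) ..
  note h1 = this
  have "(basept::real^'d lidx) = A *v basept" using assms(3) by (rule sym)
  also note h1
  finally have "(basept::real^'d lidx) = c *\<^sub>R eLo + d *\<^sub>R eHi" .
  note eq = this
  have "(basept::real^'d lidx) $ Lo = (c *\<^sub>R eLo + d *\<^sub>R eHi :: real^'d lidx) $ Lo" using eq by (simp only:)
  then show "c = 1" by simp
  have "(basept::real^'d lidx) $ Hi = (c *\<^sub>R eLo + d *\<^sub>R eHi :: real^'d lidx) $ Hi" using eq by (simp only:)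
  then show "d = 1" by simp
qed

lemma Mgrp_fix:
  assumes "m \<in> Mgrp"
  shows "m *v eLo = eLo" "m *v eHi = eHi" "Jpres m" "det m = 1" "m *v basept = basept"
proof -
  have mk: "m \<in> Kgrp" and comm: "\<And>t. m ** aa t = aa t ** m" using assms by (auto simp: Mgrp_def)
  show "Jpres m" "det m = 1" "m *v basept = basept" using KgrpD[OF mk] by auto
  have "aa 1 *v (m *v eLo) = exp 1 *\<^sub>R (m *v eLo)"
    by (metis aa_eLo comm matrix_vector_mul_assoc mv_scale)
  then have e1: "m *v eLo = (m *v eLo)$Lo *\<^sub>R eLo" by (rule eigen_Lo[rotated]) simp
  have "aa 1 *v (m *v eHi) = exp (-1) *\<^sub>R (m *v eHi)"
    by (metis aa_eHi comm matrix_vector_mul_assoc mv_scale)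
  then have e2: "m *v eHi = (m *v eHi)$Hi *\<^sub>R eHi" by (rule eigen_Hi[rotated]) simp
  have "(m *v eLo)$Lo = 1" "(m *v eHi)$Hi = 1"
    using fix_eLo_eHi[OF e1 e2 \<open>m *v basept = basept\<close>] by auto
  then show "m *v eLo = eLo" "m *v eHi = eHi" using e1 e2 by simp_all
qed

lemma weyl_facts:
  fixes \<sigma> :: "('d::finite) mat"
  assumes "weyl_elt \<sigma>"
  shows "\<sigma> *v eLo = eHi" "\<sigma> *v eHi = eLo" "Jpres \<sigma>" "det \<sigma> = 1" "\<sigma> ** \<sigma> = mat 1"
    "matrix_inv \<sigma> = \<sigma>"
proof -
  have sk: "\<sigma> \<in> Kgrp" and ss: "\<sigma> ** \<sigma> = mat 1" and cj: "\<And>t. \<sigma> ** aa t ** matrix_inv \<sigma> = aa (- t)"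
    using assms by (auto simp: weyl_elt_def)
  show "Jpres \<sigma>" "det \<sigma> = 1" "\<sigma> ** \<sigma> = mat 1" using KgrpD[OF sk] ss by auto
  have sb: "\<sigma> *v basept = basept" using KgrpD[OF sk] by auto
  show mi: "matrix_inv \<sigma> = \<sigma>" by (rule minv_unique[OF ss ss])
  have cj2: "aa (-t) ** \<sigma> = \<sigma> ** aa t" for t
  proof -
    have "aa (-t) ** \<sigma> = \<sigma> ** aa t ** (\<sigma> ** \<sigma>)" using cj[of t] mi by (simp add: matrix_mul_assoc)
    then show ?thesis using ss by simp
  qed
  have "aa (-1) *v (\<sigma> *v eLo) = (aa (-1) ** \<sigma>) *v eLo" by (simp add: matrix_vector_mul_assoc)
  also have "\<dots> = \<sigma> *v (aa 1 *v eLo)" unfolding cj2[of 1] matrix_vector_mul_assoc ..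
  also have "\<dots> = exp (- (-1)) *\<^sub>R (\<sigma> *v eLo)" by (simp add: mv_scale)
  finally have "aa (-1) *v (\<sigma> *v eLo) = exp (- (-1)) *\<^sub>R (\<sigma> *v eLo)" .
  then have e1: "\<sigma> *v eLo = (\<sigma> *v eLo)$Hi *\<^sub>R eHi" by (rule eigen_Hi[rotated]) simp
  have "aa (-1) *v (\<sigma> *v eHi) = (aa (-1) ** \<sigma>) *v eHi" by (simp add: matrix_vector_mul_assoc)
  also have "\<dots> = \<sigma> *v (aa 1 *v eHi)" unfolding cj2[of 1] matrix_vector_mul_assoc ..
  also have "\<dots> = exp (-1) *\<^sub>R (\<sigma> *v eHi)" by (simp add: mv_scale)
  finally have "aa (-1) *v (\<sigma> *v eHi) = exp (-1) *\<^sub>R (\<sigma> *v eHi)" .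
  then have e2: "\<sigma> *v eHi = (\<sigma> *v eHi)$Lo *\<^sub>R eLo" by (rule eigen_Lo[rotated]) simp
  define a where "a = (\<sigma> *v eLo)$Hi"
  define b where "b = (\<sigma> *v eHi)$Lo"
  have "\<sigma> *v basept = a *\<^sub>R eHi + b *\<^sub>R eLo"
    unfolding basept_eq mv_add a_def b_def using e1 e2 by simp
  then have "(basept :: real^'d lidx) = a *\<^sub>R eHi + b *\<^sub>R eLo" using sb by simp
  note eq = this
  have "(basept::real^'d lidx) $ Lo = (a *\<^sub>R eHi + b *\<^sub>R eLo :: real^'d lidx) $ Lo" using eq by (simp only:)
  then have "(\<sigma> *v eHi)$Lo = 1" by (simp add: b_def)
  have "(basept::real^'d lidx) $ Hi = (a *\<^sub>R eHi + b *\<^sub>R eLo :: real^'d lidx) $ Hi" using eq by (simp only:)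
  then have "(\<sigma> *v eLo)$Hi = 1" by (simp add: a_def)
  then show "\<sigma> *v eLo = eHi" "\<sigma> *v eHi = eLo" using e1 e2 \<open>(\<sigma> *v eHi)$Lo = 1\<close> by simp_all
qed



lemma null_vec:
  fixes w :: "real^('d::finite) lidx"
  assumes "Bf w w = 0" "w$Hi > 0"
  shows "w = w$Hi *\<^sub>R nv (inverse (w$Hi) *\<^sub>R midv w)"
proof (rule vec_lidx_eqI)
  have "(norm (midv w))^2 = 2 * w$Lo * w$Hi" using assms(1) by (simp add: Bf_simps)
  moreover have "(norm (inverse (w$Hi) *\<^sub>R midv w))^2 = (norm (midv w))^2 / (w$Hi)^2"
    by (simp add: power_mult_distrib power_inverse divide_inverse)
  ultimately show "w $ Lo = (w$Hi *\<^sub>R nv (inverse (w$Hi) *\<^sub>R midv w)) $ Lo"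
    using assms(2) by (simp add: power2_eq_square)
qed (use assms(2) in simp_all)

lemma col_entry: "(A *v axis j 1) $ i = (A $ i $ j :: real)"
  by (simp add: mv_entry axis_def mult.commute cong: if_cong)

lemma eLo_axis: "eLo = axis Lo 1" and eHi_axis: "eHi = axis Hi 1"
  by (rule vec_lidx_eqI; simp add: axis_def)+

lemma Mcomm:
  fixes m :: "('d::finite) mat"
  assumes J: "Jpres m" and l: "m *v eLo = eLo" and h: "m *v eHi = eHi"
  shows "m ** aa t = aa t ** m"
proof -
  have cl: "m $ i $ Lo = eLo $ i" for i using col_entry[of m Lo i] l by (simp add: eLo_axis)
  have ch: "m $ i $ Hi = eHi $ i" for i using col_entry[of m Hi i] h by (simp add: eHi_axis)
  have rh: "m $ Hi $ Mid b = 0" for b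
  proof -
    have "Bf (m *v axis (Mid b) 1) (m *v eLo) = Bf (axis (Mid b) 1) eLo" by (rule Bf_inv[OF J])
    then have "(m *v axis (Mid b) 1) $ Hi = 0" using l by (simp add: Bf_simps axis_def)
    then show ?thesis by (simp add: col_entry)
  qed
  have rl: "m $ Lo $ Mid b = 0" for b
  proof -
    have "Bf (m *v axis (Mid b) 1) (m *v eHi) = Bf (axis (Mid b) 1) eHi" by (rule Bf_inv[OF J])
    then have "(m *v axis (Mid b) 1) $ Lo = 0" using h by (simp add: Bf_simps axis_def)
    then show ?thesis by (simp add: col_entry)
  qed
  show ?thesis
    by (rule mat_eqI) (simp_all add: mult_entry sum_lidx cl ch rh rl)
qed

lemma SOn1I: "Jpres g \<Longrightarrow> det g = 1 \<Longrightarrow> (g *v basept) $ Lo > 0 \<Longrightarrow> g \<in> SOn1"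
  by (simp add: SOn1_def Jpres_def)

lemma mvA: "(A ** B) *v v = A *v (B *v (v::real^'n::finite))"
  by (simp add: matrix_vector_mul_assoc)

lemma stab_dec:
  fixes h :: "('d::finite) mat"
  assumes J: "Jpres h" and d: "det h = 1" and e: "h *v eLo = exp r *\<^sub>R eLo"
  shows "\<exists>m\<in>Mgrp. \<exists>y. h = m ** aa r ** uu y"
proof -
  define hi where "hi = matrix_inv h"
  have hh: "h ** hi = mat 1" and hh2: "hi ** h = mat 1" and Jhi: "Jpres hi"
    using Jpres_inv[OF J] by (auto simp: hi_def)
  have hiLo: "hi *v eLo = exp (-r) *\<^sub>R eLo"
  proof -
    have "hi *v eLo = hi *v (exp (-r) *\<^sub>R (exp r *\<^sub>R eLo))" by (simp add: exp_minus)
    also have "\<dots> = exp (-r) *\<^sub>R ((hi ** h) *v eLo)" by (simp add: mv_scale e mvA)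
    finally show ?thesis using hh2 by simp
  qed
  define z where "z = hi *v eHi"
  have zz: "Bf z z = 0" unfolding z_def Bf_inv[OF Jhi] by (simp add: Bf_simps)
  have "Bf z (hi *v eLo) = Bf (eHi::real^'d lidx) eLo" unfolding z_def by (rule Bf_inv[OF Jhi])
  then have "exp (-r) * (- z$Hi) = -1" by (simp add: hiLo Bf_scale Bf_simps)
  then have zH: "z$Hi = exp r" by (simp add: exp_minus field_simps)
  define y' where "y' = inverse (z$Hi) *\<^sub>R midv z"
  have zn: "z = exp r *\<^sub>R nv y'" using null_vec[OF zz] zH by (simp add: y'_def)
  define m where "m = h ** uu y' ** aa (-r)"
  have mLo: "m *v eLo = eLo" unfolding m_def by (simp add: mvA mv_scale e exp_minus)
  have "m *v eHi = h *v z" unfolding m_def zn by (simp add: mvA mv_scale nv_def)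
  then have mHi: "m *v eHi = eHi" unfolding z_def by (simp add: hh flip: mvA)
  have Jm: "Jpres m" unfolding m_def by (intro Jpres_mult J Jpres_uu Jpres_aa)
  have dm: "det m = 1" unfolding m_def by (simp add: det_mul d det_uu det_aa)
  have mb: "m *v basept = basept" by (simp add: basept_eq mv_add mLo mHi)
  have "m \<in> SOn1" by (rule SOn1I[OF Jm dm]) (simp add: mb)
  then have "m \<in> Kgrp" using mb by (simp add: Kgrp_def)
  then have mM: "m \<in> Mgrp" using Mcomm[OF Jm mLo mHi] by (simp add: Mgrp_def)
  have "m ** aa r ** uu (-y') = h ** uu y' ** (aa (-r) ** aa r) ** uu (-y')"
    unfolding m_def by (simp add: matrix_mul_assoc)
  also have "\<dots> = h" by (simp add: aa_inv matrix_mul_assoc[symmetric] uu_inv)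
  finally show ?thesis using mM by metis
qed

lemma bruhat_ex:
  fixes g \<sigma> :: "('d::finite) mat"
  assumes ws: "weyl_elt \<sigma>" and J: "Jpres g" and d: "det g = 1" and pos: "(g *v eLo)$Hi > 0"
  shows "bruhat \<sigma> g (inverse ((g *v eLo)$Hi) *\<^sub>R midv (g *v eLo)) (ln ((g *v eLo)$Hi))"
proof -
  define w where "w = g *v eLo"
  define x where "x = inverse (w$Hi) *\<^sub>R midv w"
  define r where "r = ln (w$Hi)"
  have er: "exp r = w$Hi" using pos by (simp add: r_def w_def)
  have "Bf w w = 0" unfolding w_def Bf_inv[OF J] by (simp add: Bf_simps)
  then have wn: "w = w$Hi *\<^sub>R nv x" using null_vec pos by (simp add: x_def w_def)
  note wf = weyl_facts[OF ws]
  define h where "h = \<sigma> ** uu (-x) ** g"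
  have "h *v eLo = w$Hi *\<^sub>R (\<sigma> *v ((uu (-x) ** uu x) *v eHi))"
    unfolding h_def mvA w_def[symmetric] by (subst wn) (simp add: mv_scale nv_def mvA)
  then have he: "h *v eLo = exp r *\<^sub>R eLo" by (simp add: uu_inv wf er)
  have Jh: "Jpres h" unfolding h_def by (intro Jpres_mult J Jpres_uu wf)
  have dh: "det h = 1" unfolding h_def by (simp add: det_mul d det_uu wf)
  obtain m y where mM: "m \<in> Mgrp" and hm: "h = m ** aa r ** uu y" using stab_dec[OF Jh dh he] by blast
  have "uu x ** \<sigma> ** h = uu x ** (\<sigma> ** \<sigma>) ** (uu (-x) ** g)" unfolding h_def by (simp add: matrix_mul_assoc)
  also have "\<dots> = g" by (simp add: wf matrix_mul_assoc uu_inv)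
  finally have "g = uu x ** \<sigma> ** m ** aa r ** uu y" unfolding hm by (simp add: matrix_mul_assoc)
  then show ?thesis using mM unfolding bruhat_def x_def r_def w_def by blast
qed

lemma bruhat_vec:
  fixes g \<sigma> :: "('d::finite) mat"
  assumes ws: "weyl_elt \<sigma>" and b: "bruhat \<sigma> g x r"
  shows "g *v eLo = exp r *\<^sub>R nv x"
proof -
  obtain m y where mM: "m \<in> Mgrp" and g: "g = uu x ** \<sigma> ** m ** aa r ** uu y"
    using b unfolding bruhat_def by blast
  show ?thesis unfolding g by (simp add: mvA mv_scale Mgrp_fix[OF mM] weyl_facts[OF ws] nv_def)
qed

lemma P_vec:
  fixes g :: "('d::finite) mat"
  assumes "g \<in> Pgrp" shows "(g *v eLo)$Hi = 0"
proof -
  obtain m t x where mM: "m \<in> Mgrp" and g: "g = m ** aa t ** uu x" using assms unfolding Pgrp_def by blast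
  show ?thesis unfolding g by (simp add: mvA mv_scale Mgrp_fix[OF mM])
qed



lemma minv_1: "matrix_inv (mat 1 :: ('d::finite) mat) = mat 1"
  by (rule minv_unique) simp_all

lemma Jpres_1: "Jpres (mat 1 :: ('d::finite) mat)"
  by (simp add: Jpres_def)

lemma mat1_K: "(mat 1 :: ('d::finite) mat) \<in> Kgrp"
  unfolding Kgrp_def by (auto intro!: SOn1I Jpres_1)

lemma lemC:
  fixes \<Gamma> \<Xi> \<eta> :: "('d::finite) mat set"
  assumes iv: "\<forall>\<gamma>\<in>\<Gamma>. \<forall>\<xi>1\<in>\<Xi>. \<forall>\<xi>2\<in>\<Xi>.
                       lmul (\<gamma> ** \<xi>1) (Omega \<eta> s0) \<inter> lmul \<xi>2 (Omega \<eta> s1) \<noteq> {} \<longrightarrow>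
                       \<xi>1 = \<xi>2 \<and> \<gamma> \<in> conjset \<xi>1 {n ** m | n m. n \<in> Ngrp \<and> m \<in> Mgrp}"
    and one: "mat 1 \<in> \<Xi>" and g: "\<gamma> \<in> \<Gamma>" and x: "\<xi> \<in> \<Xi>"
    and nc: "nc \<in> \<eta>" and t: "s0 \<le> t" and n': "n' \<in> \<eta>" and t': "s1 \<le> t'" and k': "k' \<in> Kgrp"
    and eq: "\<gamma> ** \<xi> ** nc ** aa t = n' ** aa t' ** k'"
  shows "\<xi> = mat 1 \<and> \<gamma> *v eLo = eLo"
proof -
  have "nc ** aa t ** mat 1 \<in> Omega \<eta> s0" unfolding Omega_def using nc t mat1_K by blast
  then have e1: "\<gamma> ** \<xi> ** (nc ** aa t ** mat 1) \<in> lmul (\<gamma> ** \<xi>) (Omega \<eta> s0)" unfolding lmul_def by blast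
  have "n' ** aa t' ** k' \<in> Omega \<eta> s1" unfolding Omega_def using n' t' k' by blast
  then have e2: "mat 1 ** (n' ** aa t' ** k') \<in> lmul (mat 1) (Omega \<eta> s1)" unfolding lmul_def by blast
  have "\<gamma> ** \<xi> ** (nc ** aa t ** mat 1) = mat 1 ** (n' ** aa t' ** k')"
    using eq by (simp add: matrix_mul_assoc)
  then have "lmul (\<gamma> ** \<xi>) (Omega \<eta> s0) \<inter> lmul (mat 1) (Omega \<eta> s1) \<noteq> {}" using e1 e2 by auto
  then have "\<xi> = mat 1 \<and> \<gamma> \<in> conjset \<xi> {n ** m | n m. n \<in> Ngrp \<and> m \<in> Mgrp}"
    using iv g x one by blast
  then obtain n m where xi: "\<xi> = mat 1" and nN: "n \<in> Ngrp" and mM: "m \<in> Mgrp" and gm: "\<gamma> = n ** m"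
    unfolding conjset_def by (auto simp: minv_1)
  obtain z where "n = uu z" using nN unfolding Ngrp_def by blast
  then show ?thesis using xi gm by (simp add: mvA Mgrp_fix[OF mM])
qed

lemma adj_lemma:
  fixes \<Gamma> C :: "('d::finite) mat set"
  assumes J: "Jpres \<xi>" and cov: "conjset \<xi> Ngrp \<subseteq> {\<gamma> ** c | \<gamma> c. \<gamma> \<in> \<Gamma> \<inter> conjset \<xi> Ngrp \<and> c \<in> C}"
  shows "\<exists>\<gamma>'\<in>\<Gamma>. \<exists>nc\<in>(\<lambda>c. matrix_inv \<xi> ** c ** \<xi>) ` C. \<gamma>' ** \<xi> ** nc = \<xi> ** uu y"
proof -
  have "\<xi> ** uu y ** matrix_inv \<xi> \<in> conjset \<xi> Ngrp" unfolding conjset_def Ngrp_def by blast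
  then obtain \<gamma>' c where g: "\<gamma>' \<in> \<Gamma>" and c: "c \<in> C" and e: "\<xi> ** uu y ** matrix_inv \<xi> = \<gamma>' ** c"
    using cov by blast
  have i1: "\<xi> ** matrix_inv \<xi> = mat 1" "matrix_inv \<xi> ** \<xi> = mat 1" using Jpres_inv[OF J] by auto
  have "\<gamma>' ** \<xi> ** (matrix_inv \<xi> ** c ** \<xi>) = \<gamma>' ** (\<xi> ** matrix_inv \<xi>) ** c ** \<xi>"
    by (simp add: matrix_mul_assoc)
  also have "\<dots> = \<gamma>' ** c ** \<xi>" by (simp add: i1)
  also have "\<dots> = \<xi> ** uu y ** (matrix_inv \<xi> ** \<xi>)" using e by (simp add: matrix_mul_assoc)
  also have "\<dots> = \<xi> ** uu y" by (simp add: i1)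
  finally show ?thesis using g c by blast
qed

lemma cont_conj: "continuous_on S (\<lambda>c::('d::finite) mat. A ** c ** B)"
  unfolding matrix_matrix_mult_def by (intro continuous_intros)

lemma sig_comm:
  fixes \<sigma> :: "('d::finite) mat"
  assumes ws: "weyl_elt \<sigma>" shows "\<sigma> ** aa t = aa (-t) ** \<sigma>"
proof -
  have cj: "\<sigma> ** aa t ** \<sigma> = aa (-t)" using ws weyl_facts[OF ws] by (simp add: weyl_elt_def)
  have "\<sigma> ** aa t = \<sigma> ** aa t ** (\<sigma> ** \<sigma>)" using weyl_facts[OF ws] by simp
  also have "\<dots> = aa (-t) ** \<sigma>" using cj by (simp add: matrix_mul_assoc)
  finally show ?thesis .
qed

lemma sigm_K:
  fixes \<sigma> m :: "('d::finite) mat"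
  assumes ws: "weyl_elt \<sigma>" and mM: "m \<in> Mgrp" shows "\<sigma> ** m \<in> Kgrp"
proof -
  note wf = weyl_facts[OF ws] and mf = Mgrp_fix[OF mM]
  have b: "(\<sigma> ** m) *v basept = basept" by (simp add: mvA mf basept_eq mv_add wf add.commute)
  show ?thesis unfolding Kgrp_def using b
    by (auto intro!: SOn1I Jpres_mult wf mf simp: det_mul wf mf)
qed

lemma uu_Hi: "(uu z *v eHi) $ Hi = 1" by simp



lemma heightA:
  fixes \<Gamma> \<Xi> \<eta> :: "('d::finite) mat set" and \<sigma> :: "'d mat"
  assumes ws: "weyl_elt \<sigma>"
    and iv: "\<forall>\<gamma>\<in>\<Gamma>. \<forall>\<xi>1\<in>\<Xi>. \<forall>\<xi>2\<in>\<Xi>.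
                       lmul (\<gamma> ** \<xi>1) (Omega \<eta> s0) \<inter> lmul \<xi>2 (Omega \<eta> s1) \<noteq> {} \<longrightarrow>
                       \<xi>1 = \<xi>2 \<and> \<gamma> \<in> conjset \<xi>1 {n ** m | n m. n \<in> Ngrp \<and> m \<in> Mgrp}"
    and one: "mat 1 \<in> \<Xi>" and sub: "is_subgroup \<Gamma>"
    and adj: "\<forall>\<xi>\<in>\<Xi>. \<forall>y. \<exists>\<gamma>'\<in>\<Gamma>. \<exists>nc\<in>\<eta>. \<gamma>' ** \<xi> ** nc = \<xi> ** uu y"
    and tr: "\<forall>x. \<exists>\<gamma>0\<in>\<Gamma>. \<exists>c\<in>\<eta>. uu x = \<gamma>0 ** c"
    and etaN: "\<eta> \<subseteq> Ngrp"
    and g: "\<gamma> \<in> \<Gamma>" and x: "\<xi> \<in> \<Xi>" and b: "bruhat \<sigma> (\<gamma> ** \<xi>) x r"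
  shows "r > - s0 - s1"
proof (rule ccontr)
  assume "\<not> r > - s0 - s1"
  then have rle: "s1 \<le> - (r + s0)" by simp
  obtain m y where mM: "m \<in> Mgrp" and gx: "\<gamma> ** \<xi> = uu x ** \<sigma> ** m ** aa r ** uu y"
    using b unfolding bruhat_def by blast
  obtain \<gamma>' nc where g': "\<gamma>' \<in> \<Gamma>" and nc: "nc \<in> \<eta>" and e1: "\<gamma>' ** \<xi> ** nc = \<xi> ** uu (-y)"
    using adj x by blast
  obtain \<gamma>0 c where g0: "\<gamma>0 \<in> \<Gamma>" and c: "c \<in> \<eta>" and e0: "uu x = \<gamma>0 ** c"
    using tr by blast
  have sub': "\<Gamma> \<subseteq> SOn1" "\<And>a b. a \<in> \<Gamma> \<Longrightarrow> b \<in> \<Gamma> \<Longrightarrow> a ** b \<in> \<Gamma>" "\<And>a. a \<in> \<Gamma> \<Longrightarrow> matrix_inv a \<in> \<Gamma>"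
    using sub unfolding is_subgroup_def by auto
  have "Jpres \<gamma>0" using SOn1D g0 sub'(1) by blast
  then have i0: "matrix_inv \<gamma>0 ** \<gamma>0 = mat 1" by (rule Jpres_inv(3))
  define \<gamma>2 where "\<gamma>2 = matrix_inv \<gamma>0 ** \<gamma> ** \<gamma>'"
  have g2: "\<gamma>2 \<in> \<Gamma>" unfolding \<gamma>2_def by (intro sub'(2) sub'(3) g g0 g')
  have "\<gamma>2 ** \<xi> ** nc = matrix_inv \<gamma>0 ** \<gamma> ** (\<gamma>' ** \<xi> ** nc)"
    unfolding \<gamma>2_def by (simp add: matrix_mul_assoc)
  also have "\<dots> = matrix_inv \<gamma>0 ** (\<gamma> ** \<xi>) ** uu (-y)" unfolding e1 by (simp add: matrix_mul_assoc)
  also have "\<dots> = matrix_inv \<gamma>0 ** uu x ** \<sigma> ** m ** aa r ** (uu y ** uu (-y))"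
    unfolding gx by (simp add: matrix_mul_assoc)
  also have "\<dots> = (matrix_inv \<gamma>0 ** \<gamma>0) ** c ** \<sigma> ** m ** aa r"
    unfolding e0 by (simp add: uu_inv matrix_mul_assoc)
  finally have e2: "\<gamma>2 ** \<xi> ** nc = c ** \<sigma> ** m ** aa r" using i0 by simp
  have mc: "m ** aa t = aa t ** m" for t using mM by (simp add: Mgrp_def)
  have "\<gamma>2 ** \<xi> ** nc ** aa s0 = c ** \<sigma> ** m ** (aa r ** aa s0)"
    using e2 by (simp add: matrix_mul_assoc)
  also have "\<dots> = c ** (\<sigma> ** aa (r + s0)) ** m"
    by (simp add: aa_mult mc matrix_mul_assoc[symmetric])
  also have "\<dots> = c ** aa (- (r + s0)) ** (\<sigma> ** m)"
    by (simp add: sig_comm[OF ws] matrix_mul_assoc)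
  finally have e3: "\<gamma>2 ** \<xi> ** nc ** aa s0 = c ** aa (- (r + s0)) ** (\<sigma> ** m)" .
  have "\<xi> = mat 1 \<and> \<gamma>2 *v eLo = eLo"
    by (rule lemC[OF iv one g2 x nc order_refl c rle sigm_K[OF ws mM] e3])
  then have xi1: "\<xi> = mat 1" and g2e: "\<gamma>2 *v eLo = eLo" by auto
  obtain z where z: "nc = uu z" using nc etaN unfolding Ngrp_def by blast
  obtain z' where z': "c = uu z'" using c etaN unfolding Ngrp_def by blast
  have "((\<gamma>2 ** \<xi> ** nc ** aa s0) *v eLo) $ Hi = 0"
    by (simp add: mvA mv_scale z xi1 g2e)
  moreover have "((c ** aa (- (r + s0)) ** (\<sigma> ** m)) *v eLo) $ Hi = exp (r + s0)"
    by (simp add: mvA mv_scale z' weyl_facts[OF ws] Mgrp_fix[OF mM])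
  ultimately show False using e3 by simp
qed

lemma heightB:
  fixes \<Gamma> \<Xi> \<eta> :: "('d::finite) mat set"
  assumes iv: "\<forall>\<gamma>\<in>\<Gamma>. \<forall>\<xi>1\<in>\<Xi>. \<forall>\<xi>2\<in>\<Xi>.
                       lmul (\<gamma> ** \<xi>1) (Omega \<eta> s0) \<inter> lmul \<xi>2 (Omega \<eta> s1) \<noteq> {} \<longrightarrow>
                       \<xi>1 = \<xi>2 \<and> \<gamma> \<in> conjset \<xi>1 {n ** m | n m. n \<in> Ngrp \<and> m \<in> Mgrp}"
    and one: "mat 1 \<in> \<Xi>" and sub: "is_subgroup \<Gamma>"
    and adj: "\<forall>\<xi>\<in>\<Xi>. \<forall>y. \<exists>\<gamma>'\<in>\<Gamma>. \<exists>nc\<in>\<eta>. \<gamma>' ** \<xi> ** nc = \<xi> ** uu y"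
    and etaN: "\<eta> \<subseteq> Ngrp" and one_eta: "mat 1 \<in> \<eta>"
    and g: "\<gamma> \<in> \<Gamma>" and x: "\<xi> \<in> \<Xi>" and J: "Jpres (\<gamma> ** \<xi>)" and d: "det (\<gamma> ** \<xi>) = 1"
    and e: "(\<gamma> ** \<xi>) *v eLo = exp r *\<^sub>R eLo"
  shows "r = 0"
proof -
  obtain m y where mM: "m \<in> Mgrp" and gx: "\<gamma> ** \<xi> = m ** aa r ** uu y"
    using stab_dec[OF J d e] by blast
  obtain \<gamma>' nc where g': "\<gamma>' \<in> \<Gamma>" and nc: "nc \<in> \<eta>" and e1: "\<gamma>' ** \<xi> ** nc = \<xi> ** uu (-y)"
    using adj x by blast
  have sub': "\<And>a b. a \<in> \<Gamma> \<Longrightarrow> b \<in> \<Gamma> \<Longrightarrow> a ** b \<in> \<Gamma>"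
    using sub unfolding is_subgroup_def by auto
  define \<gamma>2 where "\<gamma>2 = \<gamma> ** \<gamma>'"
  have g2: "\<gamma>2 \<in> \<Gamma>" unfolding \<gamma>2_def by (intro sub' g g')
  have "\<gamma>2 ** \<xi> ** nc = \<gamma> ** (\<gamma>' ** \<xi> ** nc)"
    unfolding \<gamma>2_def by (simp add: matrix_mul_assoc)
  also have "\<dots> = (\<gamma> ** \<xi>) ** uu (-y)" unfolding e1 by (simp add: matrix_mul_assoc)
  also have "\<dots> = m ** aa r ** (uu y ** uu (-y))"
    unfolding gx by (simp add: matrix_mul_assoc)
  finally have e2: "\<gamma>2 ** \<xi> ** nc = m ** aa r" by (simp add: uu_inv)
  define t where "t = max s0 (s1 - r)"
  have mc: "m ** aa t = aa t ** m" for t using mM by (simp add: Mgrp_def)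
  have "\<gamma>2 ** \<xi> ** nc ** aa t = m ** (aa r ** aa t)"
    using e2 by (simp add: matrix_mul_assoc)
  also have "\<dots> = m ** aa (r + t)" by (simp add: aa_mult)
  also have "\<dots> = mat 1 ** aa (r + t) ** m" by (simp add: mc)
  finally have e3: "\<gamma>2 ** \<xi> ** nc ** aa t = mat 1 ** aa (r + t) ** m" .
  have mK: "m \<in> Kgrp" using mM by (simp add: Mgrp_def)
  have "\<xi> = mat 1 \<and> \<gamma>2 *v eLo = eLo"
    by (rule lemC[OF iv one g2 x nc _ one_eta _ mK e3]) (auto simp: t_def)
  then have xi1: "\<xi> = mat 1" and g2e: "\<gamma>2 *v eLo = eLo" by auto
  obtain z where z: "nc = uu z" using nc etaN unfolding Ngrp_def by blast
  have "((\<gamma>2 ** \<xi> ** nc ** aa t) *v eLo) $ Lo = exp t"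
    by (simp add: mvA mv_scale z xi1 g2e)
  moreover have "((mat 1 ** aa (r + t) ** m) *v eLo) $ Lo = exp (r + t)"
    by (simp add: mvA mv_scale Mgrp_fix[OF mM])
  ultimately show "r = 0" using e3 by simp
qed



lemma Bf_basept: "Bf w basept = - w$Hi - w$Lo"
proof -
  have "midv (basept::real^'a::finite lidx) = 0" by (simp add: vec_eq_iff)
  then show ?thesis by (simp add: Bf_def)
qed

lemma midv_uu: "midv (uu p *v y) = midv y + y$Hi *\<^sub>R p"
  by (simp add: vec_eq_iff mult.commute)

lemma SOn1_mult: "a \<in> SOn1 \<Longrightarrow> b \<in> SOn1 \<Longrightarrow> Jpres (a ** b) \<and> det (a ** b) = 1"
  using SOn1D Jpres_mult by (auto simp: det_mul)

theorem lemma5p2: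
  fixes \<Gamma> \<Xi> \<eta>0 :: "('d::finite) mat set" and s0 :: real and \<sigma> :: "'d mat"
  assumes sigma: "weyl_elt \<sigma>"
    and subgrp: "is_subgroup \<Gamma>" and discr: "discrete_set \<Gamma>"
    and finvol: "finite_covolume \<Gamma>" and noncpt: "noncocompact \<Gamma>"
    and s0: "s0 > 0" and eta0: "compact \<eta>0" "\<eta>0 \<subseteq> Ngrp"
    and Xi: "finite \<Xi>" "mat 1 \<in> \<Xi>" "\<Xi> \<subseteq> SOn1"
    and cond_i: "SOn1 = {\<gamma> ** \<xi> ** w | \<gamma> \<xi> w. \<gamma> \<in> \<Gamma> \<and> \<xi> \<in> \<Xi> \<and> w \<in> Omega \<eta>0 s0}"
    and cond_ii: "\<forall>\<xi>\<in>\<Xi>. \<exists>C. compact C \<and> C \<subseteq> conjset \<xi> Ngrp \<and>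
                    conjset \<xi> Ngrp \<subseteq> {\<gamma> ** c | \<gamma> c. \<gamma> \<in> \<Gamma> \<inter> conjset \<xi> Ngrp \<and> c \<in> C}"
    and cond_iii: "\<forall>\<eta>. compact \<eta> \<and> \<eta> \<subseteq> Ngrp \<longrightarrow>
                    finite {\<gamma> \<in> \<Gamma>. (\<Union>\<xi>\<in>\<Xi>. lmul (\<gamma> ** \<xi>) (Omega \<eta> s0)) \<inter> Omega \<eta> s0 \<noteq> {}}"
    and cond_iv: "\<forall>\<eta>. compact \<eta> \<and> \<eta>0 \<subseteq> \<eta> \<and> \<eta> \<subseteq> Ngrp \<longrightarrow>
                    (\<exists>s1 > s0. \<forall>\<gamma>\<in>\<Gamma>. \<forall>\<xi>1\<in>\<Xi>. \<forall>\<xi>2\<in>\<Xi>.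
                       lmul (\<gamma> ** \<xi>1) (Omega \<eta> s0) \<inter> lmul \<xi>2 (Omega \<eta> s1) \<noteq> {} \<longrightarrow>
                       \<xi>1 = \<xi>2 \<and> \<gamma> \<in> conjset \<xi>1 {n ** m | n m. n \<in> Ngrp \<and> m \<in> Mgrp})"
  shows "\<exists>c > 0. \<forall>\<^sub>F X in at_top. \<forall>p :: real^'d.
           \<exists>\<gamma>\<in>\<Gamma>. \<exists>\<xi>\<in>\<Xi>. \<gamma> ** \<xi> \<notin> Pgrp \<and>
             (\<exists>x r. bruhat \<sigma> (\<gamma> ** \<xi>) x r \<and> x \<in> cball p (c / sqrt X) \<and> exp r \<le> X)"
proof -
  have GS: "\<Gamma> \<subseteq> SOn1" "\<And>a b. a \<in> \<Gamma> \<Longrightarrow> b \<in> \<Gamma> \<Longrightarrow> a ** b \<in> \<Gamma>"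
    using subgrp unfolding is_subgroup_def by auto
  obtain Cf where Cf: "\<forall>\<xi>\<in>\<Xi>. compact (Cf \<xi>) \<and> Cf \<xi> \<subseteq> conjset \<xi> Ngrp \<and>
                    conjset \<xi> Ngrp \<subseteq> {\<gamma> ** c | \<gamma> c. \<gamma> \<in> \<Gamma> \<inter> conjset \<xi> Ngrp \<and> c \<in> Cf \<xi>}"
    using bchoice[OF cond_ii] by blast
  define \<eta> where "\<eta> = \<eta>0 \<union> {mat 1} \<union> (\<Union>\<xi>\<in>\<Xi>. (\<lambda>c. matrix_inv \<xi> ** c ** \<xi>) ` Cf \<xi>)"
  have cC: "compact ((\<lambda>c. matrix_inv \<xi> ** c ** \<xi>) ` Cf \<xi>)" if "\<xi> \<in> \<Xi>" for \<xi>
    by (rule compact_continuous_image[OF cont_conj]) (use Cf that in blast)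
  have cpt: "compact \<eta>" unfolding \<eta>_def
    by (intro compact_Un compact_UN compact_sing eta0(1) Xi(1) cC)
  have etaN: "\<eta> \<subseteq> Ngrp"
  proof -
    have "matrix_inv \<xi> ** c ** \<xi> \<in> Ngrp" if x: "\<xi> \<in> \<Xi>" and c: "c \<in> Cf \<xi>" for \<xi> c
    proof -
      have "c \<in> conjset \<xi> Ngrp" using Cf x c by blast
      then obtain z where cz: "c = \<xi> ** uu z ** matrix_inv \<xi>" unfolding conjset_def Ngrp_def by blast
      have J: "Jpres \<xi>" using x Xi(3) SOn1D by blast
      have "matrix_inv \<xi> ** c ** \<xi> = (matrix_inv \<xi> ** \<xi>) ** uu z ** (matrix_inv \<xi> ** \<xi>)"
        unfolding cz by (simp add: matrix_mul_assoc)
      also have "\<dots> = uu z" using Jpres_inv(3)[OF J] by simp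
      finally show ?thesis unfolding Ngrp_def by blast
    qed
    moreover have "mat 1 \<in> Ngrp" unfolding Ngrp_def using uu_0 by (metis rangeI)
    ultimately show ?thesis unfolding \<eta>_def using eta0(2) by blast
  qed
  have one_eta: "mat 1 \<in> \<eta>" unfolding \<eta>_def by blast
  obtain s1 where s1: "s1 > s0" and iv: "\<forall>\<gamma>\<in>\<Gamma>. \<forall>\<xi>1\<in>\<Xi>. \<forall>\<xi>2\<in>\<Xi>.
                       lmul (\<gamma> ** \<xi>1) (Omega \<eta> s0) \<inter> lmul \<xi>2 (Omega \<eta> s1) \<noteq> {} \<longrightarrow>
                       \<xi>1 = \<xi>2 \<and> \<gamma> \<in> conjset \<xi>1 {n ** m | n m. n \<in> Ngrp \<and> m \<in> Mgrp}"
  proof -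
    have "\<eta>0 \<subseteq> \<eta>" unfolding \<eta>_def by blast
    then show ?thesis using cond_iv[rule_format, OF conjI[OF cpt conjI[OF _ etaN]]] that by blast
  qed
  have adj: "\<forall>\<xi>\<in>\<Xi>. \<forall>y. \<exists>\<gamma>'\<in>\<Gamma>. \<exists>nc\<in>\<eta>. \<gamma>' ** \<xi> ** nc = \<xi> ** uu y"
  proof (intro ballI allI)
    fix \<xi> y assume x: "\<xi> \<in> \<Xi>"
    have J: "Jpres \<xi>" using x Xi(3) SOn1D by blast
    have "\<exists>\<gamma>'\<in>\<Gamma>. \<exists>nc\<in>(\<lambda>c. matrix_inv \<xi> ** c ** \<xi>) ` Cf \<xi>. \<gamma>' ** \<xi> ** nc = \<xi> ** uu y"
      by (rule adj_lemma[OF J]) (use Cf x in blast)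
    moreover have "(\<lambda>c. matrix_inv \<xi> ** c ** \<xi>) ` Cf \<xi> \<subseteq> \<eta>" unfolding \<eta>_def using x by blast
    ultimately show "\<exists>\<gamma>'\<in>\<Gamma>. \<exists>nc\<in>\<eta>. \<gamma>' ** \<xi> ** nc = \<xi> ** uu y" by blast
  qed
  have tr: "\<forall>x. \<exists>\<gamma>0\<in>\<Gamma>. \<exists>c\<in>\<eta>. uu x = \<gamma>0 ** c"
  proof
    fix x
    obtain \<gamma>0 c where a: "\<gamma>0 \<in> \<Gamma>" "c \<in> \<eta>" and e: "\<gamma>0 ** mat 1 ** c = mat 1 ** uu x"
      using adj Xi(2) by blast
    have "uu x = \<gamma>0 ** c" using e by simp
    then show "\<exists>\<gamma>0\<in>\<Gamma>. \<exists>c\<in>\<eta>. uu x = \<gamma>0 ** c" using a by blast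
  qed
  note wf = weyl_facts[OF sigma]
  define c where "c = sqrt (2 * exp (s1 - s0))"
  have cpos: "c > 0" unfolding c_def by simp
  have main: "\<exists>\<gamma>\<in>\<Gamma>. \<exists>\<xi>\<in>\<Xi>. \<gamma> ** \<xi> \<notin> Pgrp \<and>
             (\<exists>x r. bruhat \<sigma> (\<gamma> ** \<xi>) x r \<and> x \<in> cball p (c / sqrt X) \<and> exp r \<le> X)"
    if X1: "X \<ge> 1" for X and p :: "real^'d"
  proof -
    define \<tau> where "\<tau> = ln X + s0"
    have Xpos: "X > 0" using X1 by simp
    have etau: "exp \<tau> = X * exp s0" unfolding \<tau>_def using Xpos by (simp add: exp_add)
    have taupos: "\<tau> > 0" unfolding \<tau>_def using ln_ge_zero[OF X1] s0 by linarith
    define g where "g = uu p ** \<sigma> ** aa \<tau>"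
    have gLo: "g *v eLo = exp \<tau> *\<^sub>R nv p" unfolding g_def by (simp add: mvA mv_scale wf nv_def)
    have gHi: "g *v eHi = exp (-\<tau>) *\<^sub>R eLo" unfolding g_def by (simp add: mvA mv_scale wf)
    have "g \<in> SOn1"
    proof (rule SOn1I)
      show "Jpres g" unfolding g_def by (intro Jpres_mult Jpres_uu Jpres_aa wf)
      show "det g = 1" unfolding g_def by (simp add: det_mul det_uu det_aa wf)
      have "(g *v basept) $ Lo = exp \<tau> * ((norm p)^2/2) + exp (-\<tau>)"
        by (simp add: basept_eq mv_add gLo gHi)
      also have "\<dots> > 0" by (intro add_nonneg_pos) auto
      finally show "(g *v basept) $ Lo > 0" .
    qed
    then obtain \<gamma> \<xi> w where g: "\<gamma> \<in> \<Gamma>" and x: "\<xi> \<in> \<Xi>" and w: "w \<in> Omega \<eta>0 s0"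
      and gd: "g = \<gamma> ** \<xi> ** w"
      using cond_i by blast
    obtain n s k where n: "n \<in> \<eta>0" and s: "s0 \<le> s" and k: "k \<in> Kgrp" and wd: "w = n ** aa s ** k"
      using w unfolding Omega_def by blast
    obtain zn where zn: "n = uu zn" using n eta0(2) unfolding Ngrp_def by blast
    have Jk: "Jpres k" and kb: "k *v basept = basept" using KgrpD[OF k] by auto
    define ki where "ki = matrix_inv k"
    have kki: "k ** ki = mat 1" and Jki: "Jpres ki" using Jpres_inv[OF Jk] by (auto simp: ki_def)
    have kib: "ki *v basept = basept"
    proof -
      have "ki *v basept = (ki ** k) *v basept" using kb by (simp add: mvA)
      also have "ki ** k = mat 1" using Jpres_inv[OF Jk] by (simp add: ki_def)
      finally show ?thesis by simp
    qed
    define f where "f = ki *v eLo"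
    have ff: "Bf f f = 0" unfolding f_def Bf_inv[OF Jki] by (simp add: Bf_simps)
    have "Bf f basept = Bf (eLo::real^'d lidx) basept" unfolding f_def using Bf_inv[OF Jki, of eLo basept] kib by simp
    then have fsum: "f$Lo + f$Hi = 1" by (simp add: Bf_basept)
    have fmid: "(norm (midv f))^2 = 2 * f$Lo * f$Hi" using ff by (simp add: Bf_simps)
    have fnn: "0 \<le> f$Lo" "0 \<le> f$Hi"
    proof -
      have "0 \<le> 2 * f$Lo * f$Hi" unfolding fmid[symmetric] by simp
      then have "0 \<le> f$Lo * f$Hi" by (simp add: ac_simps)
      then show "0 \<le> f$Lo" "0 \<le> f$Hi" using fsum by (auto simp: zero_le_mult_iff)
    qed
    define gx where "gx = \<gamma> ** \<xi>"
    have gxJ: "Jpres gx" "det gx = 1" unfolding gx_def using SOn1_mult g x GS(1) Xi(3) by blast+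
    define v where "v = gx *v eLo"
    have gf: "g *v f = exp s *\<^sub>R v"
    proof -
      have "g *v f = gx *v (n *v (aa s *v ((k ** ki) *v eLo)))"
        unfolding gd wd f_def gx_def by (simp add: mvA)
      then show ?thesis unfolding kki zn v_def by (simp add: mv_scale)
    qed
    define q where "q = aa \<tau> *v f"
    define sq where "sq = \<sigma> *v q"
    have "Bf sq (\<sigma> *v eHi) = Bf q eHi" unfolding sq_def by (rule Bf_inv[OF wf(3)])
    then have sqHi: "sq$Hi = exp \<tau> * f$Lo" by (simp add: wf Bf_simps q_def)
    have "Bf sq (\<sigma> *v eLo) = Bf q eLo" unfolding sq_def by (rule Bf_inv[OF wf(3)])
    then have sqLo: "sq$Lo = exp (-\<tau>) * f$Hi" by (simp add: wf Bf_simps q_def)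
    have "Bf sq sq = Bf f f" unfolding sq_def q_def Bf_inv[OF wf(3)] Bf_inv[OF Jpres_aa] ..
    then have sqsq: "Bf sq sq = 0" using ff by simp
    define y where "y = exp (-s) *\<^sub>R sq"
    have vy: "v = uu p *v y"
    proof -
      have "v = exp (-s) *\<^sub>R (g *v f)" using gf by (simp add: exp_minus)
      then show ?thesis unfolding y_def sq_def q_def g_def by (simp add: mvA mv_scale)
    qed
    have yHi: "y$Hi = exp (-s) * (exp \<tau> * f$Lo)" unfolding y_def using sqHi by simp
    have yLo: "y$Lo = exp (-s) * (exp (-\<tau>) * f$Hi)" unfolding y_def using sqLo by simp
    have vHi: "v$Hi = y$Hi" unfolding vy by simp
    show ?thesis
    proof (cases "f$Lo = 0")
      case True
      then have fH: "f$Hi = 1" using fsum by simp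
      have "midv f = 0" using fmid True by simp
      then have fe: "f = eHi" using True fH by (intro vec_lidx_eqI) (simp_all add: vec_eq_iff)
      have "v = exp (-s) *\<^sub>R (g *v f)" using gf by (simp add: exp_minus)
      then have "gx *v eLo = exp (- (s + \<tau>)) *\<^sub>R eLo" unfolding v_def fe gHi by (simp add: mult_exp_exp)
      then have "- (s + \<tau>) = 0"
        by (intro heightB[OF iv Xi(2) subgrp adj etaN one_eta g x]) (use gxJ gx_def in auto)
      then show ?thesis using taupos s s0 by simp
    next
      case False
      then have fLo: "f$Lo > 0" using fnn by simp
      have vpos: "v$Hi > 0" using vHi yHi fLo by simp
      define xx where "xx = inverse (v$Hi) *\<^sub>R midv v"
      define r where "r = ln (v$Hi)"
      have br: "bruhat \<sigma> gx xx r" unfolding xx_def r_def v_def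
        by (rule bruhat_ex[OF sigma gxJ]) (use vpos v_def in simp)
      have notP: "gx \<notin> Pgrp" using P_vec vpos v_def by fastforce
      have er: "exp r = v$Hi" using vpos by (simp add: r_def)
      have "exp r \<le> X"
      proof -
        have "exp r = exp (-s) * exp \<tau> * f$Lo" using er vHi yHi by simp
        also have "\<dots> \<le> exp (-s0) * exp \<tau> * 1"
          using s fnn fsum by (intro mult_mono) auto
        also have "\<dots> = X" using etau by (simp add: exp_minus)
        finally show ?thesis .
      qed
      have rA: "r > - s0 - s1"
        by (rule heightA[OF sigma iv Xi(2) subgrp adj tr etaN g x]) (use br gx_def in simp)
      have "exp (- s0 - s1) < exp r" using rA by simp
      then have vlow: "v$Hi > exp (- s0 - s1)" using er by simp
      have xp: "xx - p = inverse (v$Hi) *\<^sub>R midv y"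
        unfolding xx_def vy midv_uu using vpos vHi by (simp add: algebra_simps)
      have "Bf y y = 0" unfolding y_def by (simp add: Bf_scale sqsq)
      then have ymid: "(norm (midv y))^2 = 2 * y$Lo * y$Hi" by (simp add: Bf_simps)
      have "(norm (xx - p))^2 = (inverse (v$Hi))^2 * (norm (midv y))^2"
        unfolding xp using vpos by (simp add: power_mult_distrib)
      also have "\<dots> = (inverse (v$Hi))^2 * (2 * y$Lo * v$Hi)" using ymid vHi by simp
      also have "\<dots> = 2 * y$Lo / v$Hi" using vpos by (simp add: power2_eq_square field_simps)
      also have "\<dots> \<le> 2 * (exp (-s0) * exp (-\<tau>)) / exp (- s0 - s1)"
      proof (intro divide_mono mult_left_mono)
        have a: "exp (-s) \<le> exp (-s0)" using s by simp
        have b: "exp (-\<tau>) * f$Hi \<le> exp (-\<tau>)" using fnn fsum by (intro mult_left_le) auto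
        show "y$Lo \<le> exp (-s0) * exp (-\<tau>)" unfolding yLo
          by (rule mult_mono[OF a b]) (use fnn in auto)
      qed (use vlow yLo fnn in auto)
      also have "\<dots> = 2 * exp (s1 - \<tau>)"
      proof -
        have "exp (-s0) * exp (-\<tau>) / exp (- s0 - s1) = exp ((-s0) + (-\<tau>) - (- s0 - s1))"
          by (simp only: exp_diff exp_add)
        also have "(-s0) + (-\<tau>) - (- s0 - s1) = s1 - \<tau>" by simp
        finally show ?thesis by simp
      qed
      also have "\<dots> = 2 * (exp (s1 - s0) / X)"
      proof -
        have "s1 - \<tau> = (s1 - s0) - ln X" by (simp add: \<tau>_def)
        then have "exp (s1 - \<tau>) = exp (s1 - s0) / exp (ln X)" by (simp only: exp_diff)
        then show ?thesis using Xpos by simp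
      qed
      also have "\<dots> = (c / sqrt X)^2"
        unfolding c_def using Xpos by (simp add: power_divide)
      finally have "(norm (xx - p))^2 \<le> (c / sqrt X)^2" .
      then have "norm (xx - p) \<le> c / sqrt X"
        by (rule power2_le_imp_le) (use cpos Xpos in simp_all)
      then have "xx \<in> cball p (c / sqrt X)" by (simp add: dist_norm norm_minus_commute)
      have "\<gamma> ** \<xi> \<notin> Pgrp \<and> (\<exists>x r. bruhat \<sigma> (\<gamma> ** \<xi>) x r \<and> x \<in> cball p (c / sqrt X) \<and> exp r \<le> X)"
        using notP br \<open>exp r \<le> X\<close> \<open>xx \<in> cball p (c / sqrt X)\<close> unfolding gx_def by blast
      then show ?thesis using g x by blast
    qed
  qed
  have ev: "\<forall>\<^sub>F X in at_top. \<forall>p :: real^'d. \<exists>\<gamma>\<in>\<Gamma>. \<exists>\<xi>\<in>\<Xi>. \<gamma> ** \<xi> \<notin> Pgrp \<and>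
             (\<exists>x r. bruhat \<sigma> (\<gamma> ** \<xi>) x r \<and> x \<in> cball p (c / sqrt X) \<and> exp r \<le> X)"
    by (rule eventually_at_top_linorderI[of 1]) (rule allI, rule main)
  have "c > 0 \<and> (\<forall>\<^sub>F X in at_top. \<forall>p :: real^'d. \<exists>\<gamma>\<in>\<Gamma>. \<exists>\<xi>\<in>\<Xi>. \<gamma> ** \<xi> \<notin> Pgrp \<and>
             (\<exists>x r. bruhat \<sigma> (\<gamma> ** \<xi>) x r \<and> x \<in> cball p (c / sqrt X) \<and> exp r \<le> X))"
    using cpos ev by (rule conjI)
  then show ?thesis by (rule exI)
qed

end
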